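(* Let $H\ge1$, $W_j\in\mathbb{R}^{d_j\times d_{j-1}}$ for $j\in[H+1]$ be fixed matrices $\hat W_j$, write $\hat W_{i:j}=\hat W_i\cdots\hat W_j$ for $i\ge j$ and $\hat W_{j-1:j}=I$, fix $j^*\in[H+1]$ and $\epsilon>0$. Suppose $A:=\hat W_{H+1:j^*+1}$ has full row rank and $B:=\hat W_{j^*-1:1}$ has full column rank. Then any $R\in\mathbb{R}^{d_{H+1}\times d_0}$ satisfying $\|R-\hat W_{H+1:1}\|_F\le\sigma_{\min}(A)\sigma_{\min}(B)\epsilon$ can be written as $R=V_{H+1}V_H\cdots V_1$, where $$V_{j^*}=\hat W_{j^*}+A^T(AA^T)^{-1}(R-\hat W_{H+1:1})(B^TB)^{-1}B^T$$ and $V_j=\hat W_j$ for $j\ne j^*$; moreover $\|V_j-\hat W_j\|_F\le\epsilon$ for all $j$.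
   Context: $\sigma_{\min}(M)$ denotes the smallest singular value of $M$ (equivalently, for $A$ of full row rank, its $\mathrm{rank}$-th singular value, which is positive; similarly for $B$ of full column rank). $\|\cdot\|_F$ is the Frobenius norm. *)

theory Defs
  imports "Jordan_Normal_Form.DL_Rank" "Jordan_Normal_Form.Gauss_Jordan_Elimination"
          "Jordan_Normal_Form.Char_Poly"
begin

definition frob_norm :: "real mat \<Rightarrow> real" where
  "frob_norm M = sqrt (\<Sum>i<dim_row M. \<Sum>j<dim_col M. (M $$ (i,j))^2)"

definition mat_rank :: "real mat \<Rightarrow> nat" where
  "mat_rank M = vec_space.rank (dim_row M) M"

definition full_row_rank :: "real mat \<Rightarrow> bool" where
  "full_row_rank M \<longleftrightarrow> mat_rank M = dim_row M"

definition full_col_rank :: "real mat \<Rightarrow> bool" where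
  "full_col_rank M \<longleftrightarrow> mat_rank M = dim_col M"

text \<open>Smallest singular value of an m x n real matrix: the square root of the
  smallest eigenvalue of the min(m,n) x min(m,n) Gram matrix (M M^T if m <= n,
  else M^T M); these eigenvalues are the squares of the min(m,n) singular values.\<close>
definition sigma_min :: "real mat \<Rightarrow> real" where
  "sigma_min M = (if dim_row M \<le> dim_col M
     then sqrt (Min {k. eigenvalue (M * transpose_mat M) k})
     else sqrt (Min {k. eigenvalue (transpose_mat M * M) k}))"

definition minv :: "real mat \<Rightarrow> real mat" where
  "minv M = the (mat_inverse M)"

text \<open>Ordered product W_i * W_(i-1) * ... * W_j, where the empty product (i = j - 1)
  is the identity of size d (j - 1).\<close>
definition wprod :: "(nat \<Rightarrow> nat) \<Rightarrow> (nat \<Rightarrow> real mat) \<Rightarrow> nat \<Rightarrow> nat \<Rightarrow> real mat" where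
  "wprod d W i j = foldr (*) (map W (rev [j..<Suc i])) (1\<^sub>m (d (j - 1)))"

end

theory Submission
  imports Defs "HOL-Analysis.Function_Topology"
begin


lemma quad_expand:
  fixes N :: "nat \<Rightarrow> nat \<Rightarrow> real"
  assumes sym: "\<forall>i<n. \<forall>j<n. N i j = N j i"
  shows "(\<Sum>i<n. \<Sum>j<n. (v i + s * z i) * N i j * (v j + s * z j))
     = (\<Sum>i<n. \<Sum>j<n. v i * N i j * v j) + 2 * s * (\<Sum>i<n. z i * (\<Sum>j<n. N i j * v j))
       + s^2 * (\<Sum>i<n. \<Sum>j<n. z i * N i j * z j)"
proof -
  have e: "(v i + s * z i) * N i j * (v j + s * z j) = v i * N i j * v j + s * (v i * N i j * z j)
        + s * (z i * N i j * v j) + s^2 * (z i * N i j * z j)" for i j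
    by (simp add: algebra_simps power2_eq_square)
  have c1: "(\<Sum>i<n. \<Sum>j<n. v i * N i j * z j) = (\<Sum>i<n. z i * (\<Sum>j<n. N i j * v j))"
  proof -
    have "(\<Sum>i<n. \<Sum>j<n. v i * N i j * z j) = (\<Sum>j<n. \<Sum>i<n. v i * N i j * z j)"
      by (rule sum.swap)
    also have "\<dots> = (\<Sum>j<n. z j * (\<Sum>i<n. N j i * v i))"
      by (rule sum.cong, simp, simp add: sum_distrib_left sym algebra_simps)
    finally show ?thesis .
  qed
  have c2: "(\<Sum>i<n. \<Sum>j<n. z i * N i j * v j) = (\<Sum>i<n. z i * (\<Sum>j<n. N i j * v j))"
    by (simp add: sum_distrib_left algebra_simps)
  show ?thesis
    unfolding e sum.distrib sum_distrib_left[symmetric] c1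
    using c2 by (simp add: algebra_simps)
qed

lemma quad_neg_zero:
  fixes a b :: real
  assumes "a \<ge> 0" "b \<ge> 0" "\<forall>s. 2 * s * b + s^2 * a \<ge> 0"
  shows "b = 0"
proof (rule ccontr)
  assume "b \<noteq> 0" hence b: "b > 0" using assms by auto
  define s where "s = - b / (a + 1)"
  have "2 * s * b + s^2 * a \<ge> 0" using assms by auto
  hence "(2 * s * b + s^2 * a) * (a+1)^2 \<ge> 0" by simp
  moreover have "(2 * s * b + s^2 * a) * (a+1)^2 = b^2 * (- a - 2)"
  proof -
    have a1: "a + 1 \<noteq> 0" using assms(1) by linarith
    have sa: "s * (a+1) = - b" unfolding s_def using a1 by simp
    have "(2 * s * b + s^2 * a) * (a+1)^2 = 2 * b * (s * (a+1)) * (a+1) + a * (s * (a+1))^2"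
      by (simp add: algebra_simps power2_eq_square)
    also have "\<dots> = b^2 * (- a - 2)" unfolding sa by (simp add: algebra_simps power2_eq_square)
    finally show ?thesis .
  qed
  moreover have "b^2 * (- a - 2) < 0" using b assms(1)
    by (simp add: mult_pos_neg)
  ultimately show False by linarith
qed

lemma cont_sq: "continuous_on UNIV (\<lambda>f::nat\<Rightarrow>real. \<Sum>i<n. (f i)^2)"
  by (intro continuous_intros continuous_on_product_coordinates)
lemma cont_Q: "continuous_on UNIV (\<lambda>f::nat\<Rightarrow>real. \<Sum>i<n. \<Sum>j<n. f i * N i j * f j)"
  by (intro continuous_intros continuous_on_product_coordinates)
lemma compact_box: "compact (PiE UNIV (\<lambda>i::nat. if i < n then {-1..1} else {0::real}))"
proof -
  have "compactin (product_topology (\<lambda>i. euclidean) UNIV) (PiE UNIV (\<lambda>i::nat. if i < n then {-1..1} else {0::real}))"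
    by (subst compactin_PiE) (auto simp: compactin_euclidean_iff)
  thus ?thesis by (simp add: euclidean_product_topology compactin_euclidean_iff)
qed

lemma rayleigh_fun:
  fixes N :: "nat \<Rightarrow> nat \<Rightarrow> real" and n :: nat
  assumes n: "n > 0" and sym: "\<forall>i<n. \<forall>j<n. N i j = N j i"
  shows "\<exists>c v. (\<exists>i<n. v i \<noteq> 0) \<and> (\<forall>i<n. (\<Sum>j<n. N i j * v j) = c * v i)
     \<and> (\<forall>f. (\<Sum>i<n. \<Sum>j<n. f i * N i j * f j) \<ge> c * (\<Sum>i<n. (f i)^2))"
proof -
  define Q where "Q f = (\<Sum>i<n. \<Sum>j<n. f i * N i j * f j)" for f :: "nat \<Rightarrow> real"
  define L where "L f = (\<Sum>i<n. (f i)^2)" for f :: "nat \<Rightarrow> real"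
  define S where "S = PiE UNIV (\<lambda>i::nat. if i < n then {-1..1} else {0::real})"
  define K where "K = S \<inter> {f. L f = 1}"
  have cK: "compact K" unfolding K_def S_def L_def
    by (rule compact_Int_closed[OF compact_box closed_Collect_eq[OF cont_sq continuous_on_const]])
  have Kne: "K \<noteq> {}"
  proof -
    define e where "e = (\<lambda>i::nat. if i = 0 then 1 else (0::real))"
    have "e \<in> S" unfolding S_def e_def using n by (auto simp: PiE_iff)
    moreover have "L e = 1"
    proof -
      have "L e = (\<Sum>i<n. if i = 0 then 1 else 0)" unfolding L_def
        by (rule sum.cong) (auto simp: e_def)
      thus "L e = 1" using n by simp
    qed
    ultimately show ?thesis unfolding K_def by auto
  qed
  have cQ: "continuous_on K Q" unfolding Q_def
    by (rule continuous_on_subset[OF cont_Q]) auto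
  obtain v where vK: "v \<in> K" and vmin: "\<And>g. g \<in> K \<Longrightarrow> Q v \<le> Q g"
    using continuous_attains_inf[OF cK Kne cQ] by blast
  define c where "c = Q v"
  have Lv: "L v = 1" using vK unfolding K_def by auto
  have L0: "L f \<ge> 0" for f unfolding L_def by (intro sum_nonneg) auto
  have bound: "Q f \<ge> c * L f" for f
  proof (cases "L f = 0")
    case True
    hence "\<forall>i\<in>{..<n}. (f i)^2 = 0" unfolding L_def
      using sum_nonneg_eq_0_iff[of "{..<n}" "\<lambda>i. (f i)^2"] by auto
    hence "\<forall>i<n. f i = 0" by auto
    hence "Q f = 0" unfolding Q_def by simp
    thus ?thesis using True by simp
  next
    case False
    hence Lpos: "L f > 0" using L0[of f] by linarith
    define t where "t = sqrt (L f)"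
    have tpos: "t > 0" unfolding t_def using Lpos by simp
    have tt: "t^2 = L f" unfolding t_def using Lpos by simp
    define g where "g i = (if i < n then f i / t else 0)" for i
    have Lg: "L g = 1" unfolding L_def g_def using tt tpos Lpos
      by (simp add: power_divide sum_divide_distrib[symmetric] L_def)
    have gb: "g i \<in> {-1..1}" if "i < n" for i
    proof -
      have "(g i)^2 \<le> L g" unfolding L_def
        by (rule member_le_sum[of i "{..<n}" "\<lambda>i. (g i)^2"]) (use that in auto)
      hence "(g i)^2 \<le> 1^2" using Lg by simp
      hence "\<bar>g i\<bar> \<le> 1" using abs_le_square_iff by (metis abs_one)
      thus ?thesis by auto
    qed
    have "g \<in> S" unfolding S_def using gb by (auto simp: PiE_iff g_def)
    hence gK: "g \<in> K" unfolding K_def using Lg by auto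
    have "Q g = Q f / t^2" unfolding Q_def g_def using tpos
      by (simp add: sum_divide_distrib power2_eq_square)
    hence "Q f = t^2 * Q g" using tpos by simp
    moreover have "Q g \<ge> c" using vmin[OF gK] unfolding c_def .
    ultimately show ?thesis using tt L0[of f] by (metis mult.commute mult_left_mono)
  qed
  define z where "z i = (\<Sum>j<n. N i j * v j) - c * v i" for i
  define B where "B = (\<Sum>i<n. (z i)^2)"
  define a where "a = Q z - c * L z"
  have a0: "a \<ge> 0" unfolding a_def using bound[of z] by simp
  have B0: "B \<ge> 0" unfolding B_def by (intro sum_nonneg) auto
  have "2 * s * B + s^2 * a \<ge> 0" for s
  proof -
    have "Q (\<lambda>i. v i + s * z i) - c * L (\<lambda>i. v i + s * z i) \<ge> 0" using bound by simp
    moreover have "Q (\<lambda>i. v i + s * z i) = Q v + 2 * s * (\<Sum>i<n. z i * (\<Sum>j<n. N i j * v j)) + s^2 * Q z"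
      unfolding Q_def by (rule quad_expand[OF sym])
    moreover have "L (\<lambda>i. v i + s * z i) = L v + 2 * s * (\<Sum>i<n. z i * v i) + s^2 * L z"
      unfolding L_def by (simp add: power2_sum sum.distrib sum_distrib_left power_mult_distrib algebra_simps)
    moreover have "(\<Sum>i<n. z i * (\<Sum>j<n. N i j * v j)) - c * (\<Sum>i<n. z i * v i) = B"
      unfolding B_def z_def by (simp add: sum_distrib_left sum_subtractf[symmetric] power2_eq_square algebra_simps)
    ultimately show ?thesis using Lv unfolding a_def c_def by (simp add: algebra_simps)
  qed
  hence "B = 0" using quad_neg_zero[OF a0 B0] by blast
  hence "\<forall>i\<in>{..<n}. (z i)^2 = 0" unfolding B_def
    using sum_nonneg_eq_0_iff[of "{..<n}" "\<lambda>i. (z i)^2"] by auto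
  hence eig: "\<forall>i<n. (\<Sum>j<n. N i j * v j) = c * v i" unfolding z_def by auto
  have nz: "\<exists>i<n. v i \<noteq> 0"
  proof (rule ccontr)
    assume "\<not> ?thesis" hence "L v = 0" unfolding L_def by simp
    thus False using Lv by simp
  qed
  show ?thesis using nz eig bound unfolding Q_def L_def by blast
qed


lemma sprod_quad:
  assumes N: "N \<in> carrier_mat n n" and y: "y \<in> carrier_vec n"
  shows "y \<bullet> (N *\<^sub>v y) = (\<Sum>i<n. \<Sum>j<n. (y$i) * N$$(i,j) * y$j)"
proof -
  have "y \<bullet> (N *\<^sub>v y) = (\<Sum>i<n. y$i * (N *\<^sub>v y)$i)"
    unfolding scalar_prod_def using N by (simp add: atLeast0LessThan)
  also have "\<dots> = (\<Sum>i<n. y$i * (\<Sum>j<n. N$$(i,j) * y$j))"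
    by (rule sum.cong, simp) (use N y in \<open>simp add: scalar_prod_def atLeast0LessThan\<close>)
  finally show ?thesis by (simp add: sum_distrib_left mult.assoc)
qed

lemma sprod_self: "(y::real vec) \<in> carrier_vec n \<Longrightarrow> y \<bullet> y = (\<Sum>i<n. (y$i)^2)"
  unfolding scalar_prod_def power2_eq_square by (simp add: atLeast0LessThan)

lemma sprod_self_nonneg: "(y::real vec) \<bullet> y \<ge> 0"
  unfolding scalar_prod_def by (intro sum_nonneg) auto

lemma rayleigh_mat:
  fixes N :: "real mat"
  assumes N: "N \<in> carrier_mat n n" and n: "n > 0" and sym: "\<forall>i<n. \<forall>j<n. N$$(i,j) = N$$(j,i)"
  shows "\<exists>c. eigenvalue N c \<and> (\<forall>y\<in>carrier_vec n. c * (y \<bullet> y) \<le> y \<bullet> (N *\<^sub>v y))"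
proof -
  obtain c v where nz: "\<exists>i<n. v i \<noteq> 0" and eig: "\<forall>i<n. (\<Sum>j<n. N$$(i,j) * v j) = c * v i"
    and bd: "\<forall>f. (\<Sum>i<n. \<Sum>j<n. f i * N$$(i,j) * f j) \<ge> c * (\<Sum>i<n. (f i)^2)"
    using rayleigh_fun[OF n, of "\<lambda>i j. N$$(i,j)"] sym by blast
  define w where "w = vec n v"
  have w: "w \<in> carrier_vec n" unfolding w_def by simp
  have wnz: "w \<noteq> 0\<^sub>v n"
  proof
    assume "w = 0\<^sub>v n"
    then have "\<forall>i<n. v i = 0" unfolding w_def by (metis index_vec index_zero_vec(1))
    thus False using nz by auto
  qed
  have "N *\<^sub>v w = c \<cdot>\<^sub>v w"
  proof (rule eq_vecI)
    show "dim_vec (N *\<^sub>v w) = dim_vec (c \<cdot>\<^sub>v w)" using N w by simp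
    fix i assume "i < dim_vec (c \<cdot>\<^sub>v w)"
    hence i: "i < n" using w by simp
    have "(N *\<^sub>v w) $ i = (\<Sum>j<n. N$$(i,j) * v j)"
      using N i unfolding w_def by (simp add: scalar_prod_def atLeast0LessThan)
    also have "\<dots> = c * v i" using eig i by simp
    finally show "(N *\<^sub>v w) $ i = (c \<cdot>\<^sub>v w) $ i" using i unfolding w_def by simp
  qed
  hence "eigenvalue N c" unfolding eigenvalue_def eigenvector_def using w wnz N by auto
  moreover have "\<forall>y\<in>carrier_vec n. c * (y \<bullet> y) \<le> y \<bullet> (N *\<^sub>v y)"
  proof
    fix y :: "real vec" assume y: "y \<in> carrier_vec n"
    show "c * (y \<bullet> y) \<le> y \<bullet> (N *\<^sub>v y)"
      unfolding sprod_quad[OF N y] sprod_self[OF y] using bd[rule_format, of "\<lambda>i. y$i"] by simp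
  qed
  ultimately show ?thesis by blast
qed

lemma finite_eig:
  fixes N :: "real mat"
  assumes N: "N \<in> carrier_mat n n"
  shows "finite {k. eigenvalue N k}"
proof -
  have "char_poly N \<noteq> 0" using degree_monic_char_poly[OF N] by auto
  hence "finite {k. poly (char_poly N) k = 0}" by (rule poly_roots_finite)
  thus ?thesis using eigenvalue_root_char_poly[OF N] by simp
qed

lemma min_eig:
  fixes N :: "real mat"
  assumes N: "N \<in> carrier_mat n n" and n: "n > 0" and sym: "\<forall>i<n. \<forall>j<n. N$$(i,j) = N$$(j,i)"
  shows "eigenvalue N (Min {k. eigenvalue N k}) \<and>
    (\<forall>y\<in>carrier_vec n. Min {k. eigenvalue N k} * (y \<bullet> y) \<le> y \<bullet> (N *\<^sub>v y))"
proof -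
  obtain c where c: "eigenvalue N c" and cb: "\<forall>y\<in>carrier_vec n. c * (y \<bullet> y) \<le> y \<bullet> (N *\<^sub>v y)"
    using rayleigh_mat[OF N n sym] by blast
  let ?E = "{k. eigenvalue N k}"
  have fin: "finite ?E" by (rule finite_eig[OF N])
  have ne: "?E \<noteq> {}" using c by auto
  have "Min ?E \<in> ?E" using Min_in[OF fin ne] .
  moreover have "Min ?E \<le> c" using Min_le[OF fin] c by simp
  moreover have "\<forall>y\<in>carrier_vec n. Min ?E * (y \<bullet> y) \<le> y \<bullet> (N *\<^sub>v y)"
  proof
    fix y :: "real vec" assume y: "y \<in> carrier_vec n"
    have "Min ?E * (y \<bullet> y) \<le> c * (y \<bullet> y)"
      using \<open>Min ?E \<le> c\<close> sprod_self_nonneg[of y] by (rule mult_right_mono)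
    thus "Min ?E * (y \<bullet> y) \<le> y \<bullet> (N *\<^sub>v y)" using cb y by force
  qed
  ultimately show ?thesis by simp
qed



lemma sprod_self_pos:
  assumes v: "(v::real vec) \<in> carrier_vec n" and nz: "v \<noteq> 0\<^sub>v n"
  shows "v \<bullet> v > 0"
proof (rule ccontr)
  assume "\<not> v \<bullet> v > 0"
  hence "(\<Sum>i<n. (v$i)^2) = 0" using sprod_self[OF v] sprod_self_nonneg[of v] by simp
  hence "\<forall>i\<in>{..<n}. (v$i)^2 = 0" using sum_nonneg_eq_0_iff[of "{..<n}" "\<lambda>i. (v$i)^2"] by auto
  hence "v = 0\<^sub>v n" using v by (intro eq_vecI) auto
  thus False using nz by simp
qed

lemma gram_sym:
  assumes A: "(A::real mat) \<in> carrier_mat m k"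
  shows "\<forall>i<m. \<forall>j<m. (A * A\<^sup>T)$$(i,j) = (A * A\<^sup>T)$$(j,i)"
proof (intro allI impI)
  fix i j assume i: "i < m" and j: "j < m"
  have ri: "row A i \<in> carrier_vec k" and rj: "row A j \<in> carrier_vec k" using A i j by auto
  have "(A * A\<^sup>T)$$(i,j) = row A i \<bullet> row A j" using A i j by simp
  also have "\<dots> = row A j \<bullet> row A i" by (rule comm_scalar_prod[OF ri rj])
  also have "\<dots> = (A * A\<^sup>T)$$(j,i)" using A i j by simp
  finally show "(A * A\<^sup>T)$$(i,j) = (A * A\<^sup>T)$$(j,i)" .
qed

lemma gram_quad:
  assumes A: "(A::real mat) \<in> carrier_mat m k" and y: "y \<in> carrier_vec m"
  shows "y \<bullet> ((A * A\<^sup>T) *\<^sub>v y) = (A\<^sup>T *\<^sub>v y) \<bullet> (A\<^sup>T *\<^sub>v y)"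
proof -
  have "(A * A\<^sup>T) *\<^sub>v y = A *\<^sub>v (A\<^sup>T *\<^sub>v y)" using A y by (simp add: assoc_mult_mat_vec[of _ m k _ m])
  moreover have "(A\<^sup>T *\<^sub>v y) \<bullet> (A\<^sup>T *\<^sub>v y) = y \<bullet> (A *\<^sub>v (A\<^sup>T *\<^sub>v y))"
  proof -
    have "A\<^sup>T *\<^sub>v y \<in> carrier_vec k" using A unfolding carrier_vec_def by auto
    thus ?thesis using transpose_vec_mult_scalar[OF A _ y, of "A\<^sup>T *\<^sub>v y"] by simp
  qed
  ultimately show ?thesis by simp
qed

lemma pinv_bound:
  fixes A :: "real mat"
  assumes A: "A \<in> carrier_mat m k"
    and inj: "\<forall>y\<in>carrier_vec m. A\<^sup>T *\<^sub>v y = 0\<^sub>v k \<longrightarrow> y = 0\<^sub>v m"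
    and Ni: "Ninv \<in> carrier_mat m m" and NNi: "(A * A\<^sup>T) * Ninv = 1\<^sub>m m"
    and m: "m > 0"
  shows "Min {c. eigenvalue (A * A\<^sup>T) c} > 0 \<and>
    (\<forall>x\<in>carrier_vec m. ((A\<^sup>T * Ninv) *\<^sub>v x) \<bullet> ((A\<^sup>T * Ninv) *\<^sub>v x)
        \<le> (x \<bullet> x) / Min {c. eigenvalue (A * A\<^sup>T) c})"
proof -
  define N where "N = A * A\<^sup>T"
  define mu where "mu = Min {c. eigenvalue N c}"
  have N: "N \<in> carrier_mat m m" unfolding N_def using A by simp
  have me: "eigenvalue N mu" and rb: "\<forall>y\<in>carrier_vec m. mu * (y \<bullet> y) \<le> y \<bullet> (N *\<^sub>v y)"
    using min_eig[OF N m gram_sym[OF A, folded N_def]] unfolding mu_def by auto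
  have mupos: "mu > 0"
  proof -
    obtain w where w: "w \<in> carrier_vec m" "w \<noteq> 0\<^sub>v m" "N *\<^sub>v w = mu \<cdot>\<^sub>v w"
      using me N unfolding eigenvalue_def eigenvector_def by auto
    have "w \<bullet> (N *\<^sub>v w) = mu * (w \<bullet> w)" using w by simp
    moreover have "w \<bullet> (N *\<^sub>v w) > 0"
    proof -
      have "A\<^sup>T *\<^sub>v w \<noteq> 0\<^sub>v k" using inj w by auto
      moreover have "A\<^sup>T *\<^sub>v w \<in> carrier_vec k" using A unfolding carrier_vec_def by auto
      ultimately have "(A\<^sup>T *\<^sub>v w) \<bullet> (A\<^sup>T *\<^sub>v w) > 0" using sprod_self_pos by blast
      thus ?thesis unfolding N_def using gram_quad[OF A w(1)] by simp
    qed
    moreover have "w \<bullet> w > 0" using sprod_self_pos[OF w(1,2)] .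
    ultimately show ?thesis by (metis zero_less_mult_pos2)
  qed
  have "((A\<^sup>T * Ninv) *\<^sub>v x) \<bullet> ((A\<^sup>T * Ninv) *\<^sub>v x) \<le> (x \<bullet> x) / mu" if x: "x \<in> carrier_vec m" for x
  proof -
    define y where "y = Ninv *\<^sub>v x"
    have y: "y \<in> carrier_vec m" unfolding y_def using Ni x by simp
    have Ny: "N *\<^sub>v y = x" unfolding y_def using N Ni x NNi
      by (simp add: assoc_mult_mat_vec[symmetric, of _ m m _ m] N_def)
    have Px: "(A\<^sup>T * Ninv) *\<^sub>v x = A\<^sup>T *\<^sub>v y" unfolding y_def using A Ni x
      by (simp add: assoc_mult_mat_vec[of _ k m _ m])
    define s where "s = y \<bullet> x"
    have s: "(A\<^sup>T *\<^sub>v y) \<bullet> (A\<^sup>T *\<^sub>v y) = s"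
      unfolding s_def using gram_quad[OF A y] Ny N_def by simp
    have t: "mu * (y \<bullet> y) \<le> s" using rb y Ny unfolding s_def by auto
    have sq: "0 \<le> (\<Sum>i<m. (mu * y$i - x$i)^2)" by (intro sum_nonneg) auto
    also have "\<dots> = mu^2 * (y \<bullet> y) - 2 * mu * s + x \<bullet> x"
    proof -
      have e: "(mu * y$i - x$i)^2 = mu^2 * (y$i)^2 - 2 * mu * (y$i * x$i) + (x$i)^2" for i
        by (simp add: power2_diff power_mult_distrib algebra_simps)
      have dx: "dim_vec x = m" using x by simp
      have "(\<Sum>i<m. (mu * y$i - x$i)^2) = mu^2 * (\<Sum>i<m. (y$i)^2) - 2 * mu * (\<Sum>i<m. y$i * x$i) + (\<Sum>i<m. (x$i)^2)"
        unfolding e sum.distrib sum_subtractf sum_distrib_left by simp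
      moreover have "s = (\<Sum>i<m. y$i * x$i)" unfolding s_def scalar_prod_def dx atLeast0LessThan ..
      ultimately show ?thesis unfolding sprod_self[OF y] sprod_self[OF x] by simp
    qed
    finally have "0 \<le> mu^2 * (y \<bullet> y) - 2 * mu * s + x \<bullet> x" .
    moreover have "mu^2 * (y \<bullet> y) \<le> mu * s" using mult_left_mono[OF t, of mu] mupos
      by (simp add: power2_eq_square algebra_simps)
    ultimately have "mu * s \<le> x \<bullet> x" by linarith
    hence "s \<le> (x \<bullet> x) / mu" using mupos by (simp add: field_simps)
    thus ?thesis using Px s by simp
  qed
  thus ?thesis using mupos unfolding mu_def N_def by blast
qed



definition fsq :: "real mat \<Rightarrow> real" where
  "fsq M = (\<Sum>i<dim_row M. \<Sum>j<dim_col M. (M $$ (i,j))^2)"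

lemma frob_fsq: "frob_norm M = sqrt (fsq M)"
  unfolding frob_norm_def fsq_def ..

lemma fsq_nonneg: "fsq M \<ge> 0"
  unfolding fsq_def by (intro sum_nonneg) auto

lemma fsq_cols: "fsq M = (\<Sum>j<dim_col M. col M j \<bullet> col M j)"
proof -
  have "fsq M = (\<Sum>j<dim_col M. \<Sum>i<dim_row M. (M $$ (i,j))^2)"
    unfolding fsq_def by (rule sum.swap)
  also have "\<dots> = (\<Sum>j<dim_col M. col M j \<bullet> col M j)"
  proof (rule sum.cong)
    fix j assume "j \<in> {..<dim_col M}"
    hence j: "j < dim_col M" by simp
    have c: "col M j \<in> carrier_vec (dim_row M)" by simp
    show "(\<Sum>i<dim_row M. (M $$ (i,j))^2) = col M j \<bullet> col M j"
      unfolding sprod_self[OF c] using j by simp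
  qed simp
  finally show ?thesis .
qed

lemma fsq_transpose: "fsq (M\<^sup>T) = fsq M"
  unfolding fsq_def by (simp add: sum.swap[of _ "{..<dim_row M}"])

lemma fsq_mult_left:
  assumes P: "P \<in> carrier_mat k m" and Y: "Y \<in> carrier_mat m p"
    and b: "\<forall>x\<in>carrier_vec m. (P *\<^sub>v x) \<bullet> (P *\<^sub>v x) \<le> c * (x \<bullet> x)"
  shows "fsq (P * Y) \<le> c * fsq Y"
proof -
  have "fsq (P * Y) = (\<Sum>j<p. (P *\<^sub>v col Y j) \<bullet> (P *\<^sub>v col Y j))"
  proof -
    have "dim_col (P * Y) = p" using Y by simp
    hence "fsq (P * Y) = (\<Sum>j<p. col (P * Y) j \<bullet> col (P * Y) j)" unfolding fsq_cols by simp
    also have "\<dots> = (\<Sum>j<p. (P *\<^sub>v col Y j) \<bullet> (P *\<^sub>v col Y j))"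
      by (rule sum.cong) (auto simp: col_mult2[OF P Y])
    finally show ?thesis .
  qed
  also have "\<dots> \<le> (\<Sum>j<p. c * (col Y j \<bullet> col Y j))"
    by (rule sum_mono) (use b Y in auto)
  also have "\<dots> = c * fsq Y" unfolding fsq_cols using Y by (simp add: sum_distrib_left)
  finally show ?thesis .
qed

lemma fsq_mult_right:
  assumes Y: "Y \<in> carrier_mat p m" and Q: "Q \<in> carrier_mat m q"
    and b: "\<forall>x\<in>carrier_vec m. (Q\<^sup>T *\<^sub>v x) \<bullet> (Q\<^sup>T *\<^sub>v x) \<le> c * (x \<bullet> x)"
  shows "fsq (Y * Q) \<le> c * fsq Y"
proof -
  have "fsq (Y * Q) = fsq (Q\<^sup>T * Y\<^sup>T)" using transpose_mult[OF Y Q] fsq_transpose by metis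
  also have "\<dots> \<le> c * fsq (Y\<^sup>T)" by (rule fsq_mult_left[of _ q m _ p]) (use Q Y b in auto)
  also have "\<dots> = c * fsq Y" by (simp add: fsq_transpose)
  finally show ?thesis .
qed



lemma exists_max_indpt:
  "\<exists>S. maximal S (\<lambda>T. T \<subseteq> set (cols (A::real mat)) \<and> \<not> module.lin_dep class_ring (module_vec TYPE(real) n) T)"
proof -
  interpret vec_space "TYPE(real)" n .
  show ?thesis
  using maximal_exists[of "(\<lambda>T. T \<subseteq> set (cols A) \<and> \<not> lin_dep T)" "card (set (cols A))" "{}"]
  by (meson List.finite_set card_mono empty_iff empty_subsetI finite_lin_indpt2 rev_finite_subset)
qed

lemma full_row_rank_le: "(A::real mat) \<in> carrier_mat m k \<Longrightarrow> full_row_rank A \<Longrightarrow> m \<le> k"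
proof -
  assume A: "A \<in> carrier_mat m k" and f: "full_row_rank A"
  interpret vec_space "TYPE(real)" m .
  have "rank A \<le> k" by (rule rank_le_nc[OF A])
  moreover have "rank A = m" using f A unfolding full_row_rank_def mat_rank_def by simp
  ultimately show "m \<le> k" by simp
qed

lemma full_col_rank_le:
  assumes B: "(B::real mat) \<in> carrier_mat q p" and f: "full_col_rank B"
  shows "p \<le> q"
proof -
  interpret vec_space "TYPE(real)" q .
  obtain S where S: "maximal S (\<lambda>T. T \<subseteq> set (cols B) \<and> \<not> lin_dep T)"
    using exists_max_indpt by blast
  have r: "rank B = card S" by (rule rank_card_indpt[OF B S])
  have "S \<subseteq> set (cols B)" "\<not> lin_dep S" using S unfolding maximal_def by auto
  hence "S \<subseteq> carrier_vec q" using B cols_dim by blast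
  hence "card S \<le> dim" using li_le_dim(2)[OF fin_dim] \<open>\<not> lin_dep S\<close> by simp
  thus ?thesis using f r B dim_is_n unfolding full_col_rank_def mat_rank_def by simp
qed

lemma full_col_rank_inj:
  assumes B: "(B::real mat) \<in> carrier_mat q p" and f: "full_col_rank B"
  shows "\<forall>v\<in>carrier_vec p. B *\<^sub>v v = 0\<^sub>v q \<longrightarrow> v = 0\<^sub>v p"
proof (intro ballI impI, rule ccontr)
  interpret vec_space "TYPE(real)" q .
  fix v assume v: "v \<in> carrier_vec p" and Bv: "B *\<^sub>v v = 0\<^sub>v q" and nz: "v \<noteq> 0\<^sub>v p"
  have rk: "rank B = p" using f B unfolding full_col_rank_def mat_rank_def by simp
  show False
  proof (cases "distinct (cols B)")
    case True
    have "\<not> lin_dep (set (cols B))" by (rule full_rank_lin_indpt[OF B rk True])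
    moreover have "lin_dep (set (cols B))" by (rule lin_depI[OF B v nz Bv True])
    ultimately show False by simp
  next
    case False
    obtain S where S: "maximal S (\<lambda>T. T \<subseteq> set (cols B) \<and> \<not> lin_dep T)"
      using exists_max_indpt by blast
    have r: "rank B = card S" by (rule rank_card_indpt[OF B S])
    have "S \<subseteq> set (cols B)" using S unfolding maximal_def by auto
    hence "card S \<le> card (set (cols B))" by (simp add: card_mono)
    moreover have "card (set (cols B)) < length (cols B)"
      using False card_distinct card_length by (metis le_neq_implies_less)
    ultimately show False using r rk B by simp
  qed
qed

lemma full_row_rank_inj:
  assumes A: "(A::real mat) \<in> carrier_mat m k" and f: "full_row_rank A"
  shows "\<forall>y\<in>carrier_vec m. A\<^sup>T *\<^sub>v y = 0\<^sub>v k \<longrightarrow> y = 0\<^sub>v m"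
proof (intro ballI impI)
  interpret vec_space "TYPE(real)" m .
  fix y assume y: "y \<in> carrier_vec m" and Ay: "A\<^sup>T *\<^sub>v y = 0\<^sub>v k"
  have rk: "rank A = m" using f A unfolding full_row_rank_def mat_rank_def by simp
  obtain S where S: "maximal S (\<lambda>T. T \<subseteq> set (cols A) \<and> \<not> lin_dep T)"
    using exists_max_indpt by blast
  have r: "rank A = card S" by (rule rank_card_indpt[OF A S])
  have SA: "S \<subseteq> set (cols A)" and li: "\<not> lin_dep S" using S unfolding maximal_def by auto
  have Sc: "S \<subseteq> carrier_vec m" using SA A cols_dim by blast
  have fS: "finite S" using SA finite_subset by blast
  have "basis S" by (rule dim_li_is_basis[OF fin_dim fS _ li]) (use Sc r rk dim_is_n in auto)
  hence sp: "span S = carrier_vec m" using basis_def by simp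
  obtain a X where X: "y = lincomb a X" "finite X" "X \<subseteq> S"
    using y unfolding sp[symmetric] span_def by blast
  have orth: "x \<bullet> y = 0" if "x \<in> S" for x
  proof -
    have "x \<in> set (cols A)" using SA that by auto
    then obtain j where j: "j < k" "x = col A j" using A by (auto simp: cols_def)
    have "(A\<^sup>T *\<^sub>v y) $ j = x \<bullet> y" using j A by simp
    thus ?thesis using Ay j by simp
  qed
  have Xc: "X \<subseteq> carrier_vec m" using X Sc by auto
  have "y \<bullet> y = (\<Sum>i<m. (\<Sum>x\<in>X. a x * x $ i) * y $ i)"
    unfolding scalar_prod_def using y X(1) lincomb_index[OF _ Xc]
    by (simp add: atLeast0LessThan)
  also have "\<dots> = (\<Sum>x\<in>X. a x * (\<Sum>i<m. x $ i * y $ i))"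
    by (simp add: sum_distrib_left sum_distrib_right sum.swap[of _ X] mult.assoc)
  also have "\<dots> = (\<Sum>x\<in>X. a x * (x \<bullet> y))"
    using Xc y by (intro sum.cong) (auto simp: scalar_prod_def atLeast0LessThan)
  also have "\<dots> = 0" using orth X by (simp add: subset_iff)
  finally have "y \<bullet> y = 0" .
  thus "y = 0\<^sub>v m" using sprod_self_pos[OF y] by fastforce
qed



lemma eigen_transfer:
  fixes X Y :: "real mat"
  assumes X: "X \<in> carrier_mat a b" and Y: "Y \<in> carrier_mat b a"
    and inj: "\<forall>v\<in>carrier_vec a. Y *\<^sub>v v = 0\<^sub>v b \<longrightarrow> v = 0\<^sub>v a"
    and e: "eigenvalue (X * Y) c"
  shows "eigenvalue (Y * X) c"
proof -
  obtain v where v: "v \<in> carrier_vec a" "v \<noteq> 0\<^sub>v a" "(X * Y) *\<^sub>v v = c \<cdot>\<^sub>v v"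
    using e X Y unfolding eigenvalue_def eigenvector_def by auto
  define w where "w = Y *\<^sub>v v"
  have w: "w \<in> carrier_vec b" unfolding w_def using Y v by simp
  have wnz: "w \<noteq> 0\<^sub>v b" using inj v unfolding w_def by auto
  have "(Y * X) *\<^sub>v w = Y *\<^sub>v ((X * Y) *\<^sub>v v)" unfolding w_def using X Y v
    by (simp add: assoc_mult_mat_vec[of _ b a _ b] assoc_mult_mat_vec[of _ a b _ a])
  also have "\<dots> = c \<cdot>\<^sub>v w" unfolding v(3) w_def using Y v by (simp add: mult_mat_vec)
  finally show ?thesis unfolding eigenvalue_def eigenvector_def using w wnz X Y by auto
qed

lemma square_inj_transpose:
  fixes B :: "real mat"
  assumes B: "B \<in> carrier_mat q q" and inj: "\<forall>v\<in>carrier_vec q. B *\<^sub>v v = 0\<^sub>v q \<longrightarrow> v = 0\<^sub>v q"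
  shows "\<forall>v\<in>carrier_vec q. B\<^sup>T *\<^sub>v v = 0\<^sub>v q \<longrightarrow> v = 0\<^sub>v q"
proof -
  have "det B \<noteq> 0" using det_0_iff_vec_prod_zero[OF B] inj by auto
  hence "det (B\<^sup>T) \<noteq> 0" using det_transpose[OF B] by simp
  thus ?thesis using det_0_iff_vec_prod_zero[of "B\<^sup>T" q] B by auto
qed

lemma square_eig_eq:
  fixes B :: "real mat"
  assumes B: "B \<in> carrier_mat q q" and inj: "\<forall>v\<in>carrier_vec q. B *\<^sub>v v = 0\<^sub>v q \<longrightarrow> v = 0\<^sub>v q"
  shows "{c. eigenvalue (B * B\<^sup>T) c} = {c. eigenvalue (B\<^sup>T * B) c}"
proof -
  have injT: "\<forall>v\<in>carrier_vec q. B\<^sup>T *\<^sub>v v = 0\<^sub>v q \<longrightarrow> v = 0\<^sub>v q"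
    by (rule square_inj_transpose[OF B inj])
  have Bt: "B\<^sup>T \<in> carrier_mat q q" using B by simp
  show ?thesis
    using eigen_transfer[OF B Bt injT] eigen_transfer[OF Bt B inj] by blast
qed



lemma wprod_empty: "wprod d W i (Suc i) = 1\<^sub>m (d i)"
  unfolding wprod_def by simp

lemma wprod_step: "j \<le> Suc i \<Longrightarrow> wprod d W (Suc i) j = W (Suc i) * wprod d W i j"
  unfolding wprod_def by (simp add: upt_Suc_append)

lemma wprod_cong: "(\<And>l. j \<le> l \<Longrightarrow> l \<le> i \<Longrightarrow> V l = W l) \<Longrightarrow> wprod d V i j = wprod d W i j"
  unfolding wprod_def by (intro arg_cong2[where f = "foldr (*)"] map_cong) auto

lemma wprod_carrier:
  assumes "1 \<le> j" "j \<le> Suc i" "\<forall>l\<in>{j..i}. W l \<in> carrier_mat (d l) (d (l - 1))"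
  shows "wprod d W i j \<in> carrier_mat (d i) (d (j - 1))"
  using assms
proof (induction i)
  case 0
  hence "j = 1" by simp
  thus ?case using wprod_empty[of d W 0] by simp
next
  case (Suc i)
  show ?case
  proof (cases "j = Suc (Suc i)")
    case True
    thus ?thesis using wprod_empty[of d W "Suc i"] by simp
  next
    case False
    hence j: "j \<le> Suc i" using Suc.prems by simp
    have "Suc i \<in> {j..Suc i}" using j by simp
    hence "W (Suc i) \<in> carrier_mat (d (Suc i)) (d (Suc i - 1))" using Suc.prems by blast
    hence W: "W (Suc i) \<in> carrier_mat (d (Suc i)) (d i)" by simp
    have "wprod d W i j \<in> carrier_mat (d i) (d (j - 1))" using Suc.IH Suc.prems j by auto
    thus ?thesis unfolding wprod_step[OF j] using W by simp
  qed
qed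

lemma wprod_split:
  assumes "1 \<le> j" "j \<le> Suc k" "k \<le> i" "\<forall>l\<in>{j..i}. W l \<in> carrier_mat (d l) (d (l - 1))"
  shows "wprod d W i j = wprod d W i (Suc k) * wprod d W k j"
  using assms
proof (induction i)
  case 0
  hence k: "k = 0" by simp
  have "wprod d W 0 j \<in> carrier_mat (d 0) (d (j - 1))" using 0 k by (intro wprod_carrier) auto
  thus ?case using k wprod_empty[of d W 0] by simp
next
  case (Suc i)
  show ?case
  proof (cases "k = Suc i")
    case True
    have "wprod d W (Suc i) j \<in> carrier_mat (d (Suc i)) (d (j - 1))"
      using Suc.prems True by (intro wprod_carrier) auto
    thus ?thesis using True wprod_empty[of d W "Suc i"] by simp
  next
    case False
    hence k: "k \<le> i" using Suc.prems by simp
    have j: "j \<le> Suc i" using Suc.prems k by simp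
    have "Suc i \<in> {j..Suc i}" using j by simp
    hence "W (Suc i) \<in> carrier_mat (d (Suc i)) (d (Suc i - 1))" using Suc.prems by blast
    hence W: "W (Suc i) \<in> carrier_mat (d (Suc i)) (d i)" by simp
    have c1: "wprod d W i (Suc k) \<in> carrier_mat (d i) (d k)"
      using Suc.prems k by (intro wprod_carrier[where j = "Suc k", simplified]) auto
    have c2: "wprod d W k j \<in> carrier_mat (d k) (d (j - 1))"
      using Suc.prems k by (intro wprod_carrier) auto
    have "wprod d W (Suc i) j = W (Suc i) * wprod d W i j" by (rule wprod_step[OF j])
    also have "\<dots> = W (Suc i) * (wprod d W i (Suc k) * wprod d W k j)"
      using Suc.IH Suc.prems k by auto
    also have "\<dots> = (W (Suc i) * wprod d W i (Suc k)) * wprod d W k j"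
      using assoc_mult_mat[OF W c1 c2] by simp
    also have "\<dots> = wprod d W (Suc i) (Suc k) * wprod d W k j"
      using wprod_step[of "Suc k" i d W] k by simp
    finally show ?thesis .
  qed
qed



lemma gram_inverse:
  fixes A :: "real mat"
  assumes A: "A \<in> carrier_mat m k"
    and inj: "\<forall>y\<in>carrier_vec m. A\<^sup>T *\<^sub>v y = 0\<^sub>v k \<longrightarrow> y = 0\<^sub>v m"
  shows "minv (A * A\<^sup>T) \<in> carrier_mat m m \<and> (A * A\<^sup>T) * minv (A * A\<^sup>T) = 1\<^sub>m m
     \<and> minv (A * A\<^sup>T) * (A * A\<^sup>T) = 1\<^sub>m m"
proof -
  define N where "N = A * A\<^sup>T"
  have N: "N \<in> carrier_mat m m" unfolding N_def using A by simp
  have "det N \<noteq> 0"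
  proof
    assume "det N = 0"
    then obtain v where v: "v \<in> carrier_vec m" "v \<noteq> 0\<^sub>v m" "N *\<^sub>v v = 0\<^sub>v m"
      using det_0_iff_vec_prod_zero[OF N] by auto
    have "(A\<^sup>T *\<^sub>v v) \<bullet> (A\<^sup>T *\<^sub>v v) = 0"
      using gram_quad[OF A v(1)] v unfolding N_def by simp
    moreover have "A\<^sup>T *\<^sub>v v \<in> carrier_vec k" using A unfolding carrier_vec_def by auto
    ultimately have "A\<^sup>T *\<^sub>v v = 0\<^sub>v k" using sprod_self_pos by fastforce
    thus False using inj v by auto
  qed
  hence U: "N \<in> Units (ring_mat TYPE(real) m ())" by (rule det_non_zero_imp_unit[OF N])
  obtain X where X: "mat_inverse N = Some X"
    using mat_inverse(1)[OF N, where b = "()"] U by (cases "mat_inverse N") auto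
  have "N * X = 1\<^sub>m m \<and> X * N = 1\<^sub>m m \<and> X \<in> carrier_mat m m" by (rule mat_inverse(2)[OF N X])
  moreover have "minv N = X" unfolding minv_def X by simp
  ultimately show ?thesis unfolding N_def by simp
qed

lemma inv_sym:
  fixes N X :: "real mat"
  assumes N: "N \<in> carrier_mat m m" and X: "X \<in> carrier_mat m m"
    and s: "N\<^sup>T = N" and NX: "N * X = 1\<^sub>m m"
  shows "X\<^sup>T = X"
proof -
  have "X\<^sup>T * N = 1\<^sub>m m"
  proof -
    have "(N * X)\<^sup>T = X\<^sup>T * N\<^sup>T" by (rule transpose_mult[OF N X])
    thus ?thesis using NX s by simp
  qed
  have "X\<^sup>T = X\<^sup>T * (N * X)" using NX X by simp
  also have "\<dots> = (X\<^sup>T * N) * X" using assoc_mult_mat[of "X\<^sup>T" m m N m X m] X N by simp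
  also have "\<dots> = X" using \<open>X\<^sup>T * N = 1\<^sub>m m\<close> X by simp
  finally show ?thesis .
qed

lemma mult_inner_zero:
  assumes "X \<in> carrier_mat a 0" "Y \<in> carrier_mat 0 b"
  shows "X * Y = 0\<^sub>m a b"
  using assms by (intro eq_matI) (auto simp: scalar_prod_def)

lemma fsq_zero: "fsq (0\<^sub>m a b) = 0"
  unfolding fsq_def by simp



lemma fsq_diff_same: "W \<in> carrier_mat a b \<Longrightarrow> fsq (W - W) = 0"
  unfolding fsq_def by simp

lemma fsq_diff_add: "W \<in> carrier_mat a b \<Longrightarrow> C \<in> carrier_mat a b \<Longrightarrow> fsq ((W + C) - W) = fsq C"
  unfolding fsq_def by simp

lemma add_minus_cancel_mat: "Wf \<in> carrier_mat a b \<Longrightarrow> R \<in> carrier_mat a b \<Longrightarrow> Wf + (R - Wf) = (R :: real mat)"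
  by (intro eq_matI) auto

lemma wprod_mid:
  assumes "1 \<le> jstar" "jstar \<le> H + 1" "\<forall>l\<in>{1..H+1}. U l \<in> carrier_mat (d l) (d (l - 1))"
  shows "wprod d U (H+1) 1 = wprod d U (H+1) (Suc jstar) * (U jstar * wprod d U (jstar - 1) 1)"
proof -
  have "wprod d U (H+1) 1 = wprod d U (H+1) (Suc jstar) * wprod d U jstar 1"
    using assms by (intro wprod_split) auto
  moreover have "wprod d U (Suc (jstar - 1)) 1 = U (Suc (jstar - 1)) * wprod d U (jstar - 1) 1"
    by (rule wprod_step) simp
  ultimately show ?thesis using assms(1) by simp
qed




theorem lemmaA6:
  fixes H jstar :: nat and d :: "nat \<Rightarrow> nat" and W :: "nat \<Rightarrow> real mat"
    and eps :: real and R :: "real mat"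
  assumes "H \<ge> 1"
    and "\<forall>j\<in>{1..H+1}. W j \<in> carrier_mat (d j) (d (j - 1))"
    and "jstar \<in> {1..H+1}"
    and "eps > 0"
    and "full_row_rank (wprod d W (H+1) (jstar+1))"
    and "full_col_rank (wprod d W (jstar - 1) 1)"
    and "R \<in> carrier_mat (d (H+1)) (d 0)"
    and "frob_norm (R - wprod d W (H+1) 1)
           \<le> sigma_min (wprod d W (H+1) (jstar+1)) * sigma_min (wprod d W (jstar - 1) 1) * eps"
  shows "let A = wprod d W (H+1) (jstar+1); B = wprod d W (jstar - 1) 1;
             V = (\<lambda>j. if j = jstar then
                   W j + transpose_mat A * minv (A * transpose_mat A) * (R - wprod d W (H+1) 1)
                         * minv (transpose_mat B * B) * transpose_mat B
                 else W j)
         in R = wprod d V (H+1) 1 \<and> (\<forall>j\<in>{1..H+1}. frob_norm (V j - W j) \<le> eps)"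
proof -
  note Wc = assms(2)
  have js1: "1 \<le> jstar" and js2: "jstar \<le> H + 1" using assms(3) by auto
  define A where "A = wprod d W (H+1) (jstar+1)"
  define B where "B = wprod d W (jstar - 1) 1"
  define Wf where "Wf = wprod d W (H+1) 1"
  define E where "E = R - Wf"
  define NAi where "NAi = minv (A * A\<^sup>T)"
  define NBi where "NBi = minv (B\<^sup>T * B)"
  define C where "C = A\<^sup>T * NAi * E * NBi * B\<^sup>T"
  define V where "V = (\<lambda>j. if j = jstar then W j + C else W j)"
  define m where "m = d (H+1)"
  define k where "k = d jstar"
  define q where "q = d (jstar - 1)"
  define p where "p = d 0"
  have Ac: "A \<in> carrier_mat m k" unfolding A_def m_def k_def
    using wprod_carrier[of "jstar+1" "H+1" W d] Wc js1 js2 by auto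
  have Bc: "B \<in> carrier_mat q p" unfolding B_def q_def p_def
  proof -
    have "\<forall>l\<in>{1..jstar-1}. W l \<in> carrier_mat (d l) (d (l - 1))" using Wc js2 by auto
    thus "wprod d W (jstar - 1) 1 \<in> carrier_mat (d (jstar - 1)) (d 0)"
      using wprod_carrier[of 1 "jstar-1" W d] by auto
  qed
  have Wfc: "Wf \<in> carrier_mat m p" unfolding Wf_def m_def p_def
    using wprod_carrier[of 1 "H+1" W d] Wc by auto
  have Rc: "R \<in> carrier_mat m p" using assms(7) unfolding m_def p_def .
  have Ec: "E \<in> carrier_mat m p" unfolding E_def using Rc Wfc by (metis minus_carrier_mat)
  have Wjc: "W jstar \<in> carrier_mat k q" unfolding k_def q_def using Wc js1 js2 by auto
  have injA: "\<forall>y\<in>carrier_vec m. A\<^sup>T *\<^sub>v y = 0\<^sub>v k \<longrightarrow> y = 0\<^sub>v m"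
    by (rule full_row_rank_inj[OF Ac assms(5)[folded A_def]])
  have injB: "\<forall>v\<in>carrier_vec p. B *\<^sub>v v = 0\<^sub>v q \<longrightarrow> v = 0\<^sub>v p"
    by (rule full_col_rank_inj[OF Bc assms(6)[folded B_def]])
  have Btc: "B\<^sup>T \<in> carrier_mat p q" using Bc by simp
  have injBT: "\<forall>v\<in>carrier_vec p. (B\<^sup>T)\<^sup>T *\<^sub>v v = 0\<^sub>v q \<longrightarrow> v = 0\<^sub>v p" using injB by simp
  have GA: "NAi \<in> carrier_mat m m" "(A * A\<^sup>T) * NAi = 1\<^sub>m m" "NAi * (A * A\<^sup>T) = 1\<^sub>m m"
    using gram_inverse[OF Ac injA] unfolding NAi_def by auto
  have GB: "NBi \<in> carrier_mat p p" "(B\<^sup>T * B) * NBi = 1\<^sub>m p" "NBi * (B\<^sup>T * B) = 1\<^sub>m p"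
    using gram_inverse[OF Btc injBT] unfolding NBi_def by auto
  define P where "P = A\<^sup>T * NAi"
  define Q where "Q = NBi * B\<^sup>T"
  have Pc: "P \<in> carrier_mat k m" unfolding P_def using Ac GA by simp
  have Qc: "Q \<in> carrier_mat p q" unfolding Q_def using Bc GB by simp
  have PEc: "P * E \<in> carrier_mat k p" using Pc Ec by simp
  have CPQ: "C = (P * E) * Q" unfolding C_def P_def[symmetric] Q_def
    using assoc_mult_mat[OF PEc GB(1) Btc] by simp
  have Cc: "C \<in> carrier_mat k q" unfolding CPQ using PEc Qc by simp
  have AP: "A * P = 1\<^sub>m m" unfolding P_def
    using assoc_mult_mat[of A m k "A\<^sup>T" m NAi m] Ac GA by simp
  have QB: "Q * B = 1\<^sub>m p" unfolding Q_def
    using assoc_mult_mat[of NBi p p "B\<^sup>T" q B p] Bc GB by simp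
  have CB: "C * B = P * E" unfolding CPQ
    using assoc_mult_mat[OF PEc Qc Bc] QB right_mult_one_mat[OF PEc] by simp
  have ACB: "A * (C * B) = E" unfolding CB
    using assoc_mult_mat[OF Ac Pc Ec, symmetric] AP left_mult_one_mat[OF Ec] by simp
  have Vc: "\<forall>l\<in>{1..H+1}. V l \<in> carrier_mat (d l) (d (l - 1))"
    unfolding V_def using Wc Cc Wjc k_def q_def by auto
  have VA0: "wprod d V (H+1) (Suc jstar) = wprod d W (H+1) (Suc jstar)"
    by (intro wprod_cong) (auto simp: V_def)
  have VA: "wprod d V (H+1) (Suc jstar) = A" unfolding A_def using VA0 by simp
  have VB: "wprod d V (jstar - 1) 1 = B" unfolding B_def
    using js1 by (intro wprod_cong) (auto simp: V_def)
  have WA: "wprod d W (H+1) (Suc jstar) = A" unfolding A_def by simp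
  have "wprod d V (H+1) 1 = A * ((W jstar + C) * B)"
  proof -
    have Vj: "V jstar = W jstar + C" unfolding V_def by simp
    show ?thesis using wprod_mid[OF js1 js2 Vc] unfolding VA VB Vj .
  qed
  also have "\<dots> = A * (W jstar * B) + A * (C * B)"
  proof -
    have "(W jstar + C) * B = W jstar * B + C * B" by (rule add_mult_distrib_mat[OF Wjc Cc Bc])
    moreover have "A * (W jstar * B + C * B) = A * (W jstar * B) + A * (C * B)"
      by (rule mult_add_distrib_mat[OF Ac]) (use Wjc Cc Bc in auto)
    ultimately show ?thesis by simp
  qed
  also have "A * (W jstar * B) = Wf"
    using wprod_mid[OF js1 js2 Wc] WA unfolding Wf_def B_def by simp
  finally have prodV: "wprod d V (H+1) 1 = R"
    unfolding ACB E_def using add_minus_cancel_mat[OF Wfc Rc] by simp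
  have fsqC: "fsq C \<le> eps^2"
  proof (cases "m = 0 \<or> p = 0")
    case True
    have "P * E = 0\<^sub>m k p \<or> C = 0\<^sub>m k q"
    proof (cases "m = 0")
      case True
      thus ?thesis using mult_inner_zero[of P k E p] Pc Ec by simp
    next
      case False
      hence "p = 0" using \<open>m = 0 \<or> p = 0\<close> by simp
      thus ?thesis unfolding CPQ using mult_inner_zero[of "P * E" k Q q] PEc Qc by simp
    qed
    hence "C = 0\<^sub>m k q" unfolding CPQ using Qc by auto
    thus ?thesis using fsq_zero by simp
  next
    case False
    hence m0: "m > 0" and p0: "p > 0" by auto
    define muA where "muA = Min {c. eigenvalue (A * A\<^sup>T) c}"
    define muB where "muB = Min {c. eigenvalue (B\<^sup>T * B) c}"
    have pA: "muA > 0" and bA: "\<forall>x\<in>carrier_vec m. (P *\<^sub>v x) \<bullet> (P *\<^sub>v x) \<le> (1 / muA) * (x \<bullet> x)"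
      using pinv_bound[OF Ac injA GA(1) GA(2) m0] unfolding muA_def P_def by auto
    have pbB: "Min {c. eigenvalue (B\<^sup>T * B\<^sup>T\<^sup>T) c} > 0 \<and>
      (\<forall>x\<in>carrier_vec p. ((B\<^sup>T\<^sup>T * NBi) *\<^sub>v x) \<bullet> ((B\<^sup>T\<^sup>T * NBi) *\<^sub>v x)
        \<le> (x \<bullet> x) / Min {c. eigenvalue (B\<^sup>T * B\<^sup>T\<^sup>T) c})"
      by (rule pinv_bound[OF Btc injBT GB(1) _ p0]) (use GB in simp)
    have NBs: "NBi\<^sup>T = NBi"
      by (rule inv_sym[of "B\<^sup>T * B" p]) (use Bc GB in \<open>auto simp: transpose_mult[of _ p q]\<close>)
    have QT: "Q\<^sup>T = B * NBi" unfolding Q_def using transpose_mult[OF GB(1) Btc] NBs by simp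
    have pB: "muB > 0" and bB: "\<forall>x\<in>carrier_vec p. (Q\<^sup>T *\<^sub>v x) \<bullet> (Q\<^sup>T *\<^sub>v x) \<le> (1 / muB) * (x \<bullet> x)"
      using pbB unfolding muB_def QT by auto
    have f1: "fsq (P * E) \<le> (1 / muA) * fsq E" by (rule fsq_mult_left[OF Pc Ec bA])
    have f2: "fsq C \<le> (1 / muB) * fsq (P * E)" unfolding CPQ by (rule fsq_mult_right[OF PEc Qc bB])
    have fC: "fsq C \<le> fsq E / (muA * muB)"
    proof -
      have "fsq C \<le> (1 / muB) * ((1 / muA) * fsq E)"
        using f2 mult_left_mono[OF f1, of "1 / muB"] pB by simp
      thus ?thesis by (simp add: field_simps)
    qed
    have mk: "m \<le> k" by (rule full_row_rank_le[OF Ac assms(5)[folded A_def]])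
    have pq: "p \<le> q" by (rule full_col_rank_le[OF Bc assms(6)[folded B_def]])
    have sA: "sigma_min A = sqrt muA" unfolding sigma_min_def muA_def using Ac mk by simp
    have sB: "sigma_min B = sqrt muB"
    proof (cases "q \<le> p")
      case True
      hence qp: "q = p" using pq by simp
      have Bsq: "B \<in> carrier_mat q q" using Bc qp by simp
      have injB': "\<forall>v\<in>carrier_vec q. B *\<^sub>v v = 0\<^sub>v q \<longrightarrow> v = 0\<^sub>v q" using injB qp by simp
      show ?thesis unfolding sigma_min_def muB_def using Bc True square_eig_eq[OF Bsq injB'] by simp
    next
      case False
      thus ?thesis unfolding sigma_min_def muB_def using Bc by simp
    qed
    have hyp: "sqrt (fsq E) \<le> sqrt muA * sqrt muB * eps"
      using assms(8) unfolding frob_fsq E_def[symmetric] Wf_def[symmetric] A_def[symmetric] B_def[symmetric] sA sB .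
    have "fsq E \<le> (sqrt muA * sqrt muB * eps)^2"
    proof -
      have "(sqrt (fsq E))^2 \<le> (sqrt muA * sqrt muB * eps)^2"
        using hyp fsq_nonneg[of E] by (intro power_mono) auto
      thus ?thesis using fsq_nonneg[of E] by simp
    qed
    also have "\<dots> = muA * muB * eps^2" using pA pB by (simp add: power_mult_distrib)
    finally have "fsq E \<le> muA * muB * eps^2" .
    hence "fsq E / (muA * muB) \<le> eps^2" using pA pB by (simp add: field_simps)
    thus ?thesis using fC by simp
  qed
  have normV: "\<forall>j\<in>{1..H+1}. frob_norm (V j - W j) \<le> eps"
  proof
    fix j assume j: "j \<in> {1..H+1}"
    show "frob_norm (V j - W j) \<le> eps"
    proof (cases "j = jstar")
      case True
      have "fsq (V j - W j) = fsq C" unfolding V_def using True fsq_diff_add[OF Wjc Cc] by simp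
      hence "frob_norm (V j - W j) = sqrt (fsq C)" by (simp add: frob_fsq)
      also have "\<dots> \<le> sqrt (eps^2)" using fsqC by (rule real_sqrt_le_mono)
      also have "\<dots> = eps" using assms(4) by simp
      finally show ?thesis .
    next
      case False
      have "W j \<in> carrier_mat (d j) (d (j - 1))" using Wc j by auto
      hence "fsq (V j - W j) = 0" unfolding V_def using False fsq_diff_same by simp
      thus ?thesis using assms(4) by (simp add: frob_fsq)
    qed
  qed
  have main: "R = wprod d V (H+1) 1 \<and> (\<forall>j\<in>{1..H+1}. frob_norm (V j - W j) \<le> eps)"
    using prodV normV by simp
  show ?thesis unfolding Let_def using main
    unfolding V_def C_def E_def Wf_def NAi_def NBi_def A_def B_def .
qed

end
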